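(* Let $G=(V,E)$ be a naturally ordered DAG. For every finite set $f_1,\dots,f_r\in\mathbb R[\Sigma]$ there exist $s\in S_G$ and $h_1,\dots,h_r\in\mathbb R[\Sigma_E]$ such that $sf_i-h_i\in I_G$ for $i=1,\dots,r$.
   Context: $\mathbb R[\Sigma]$ is the polynomial ring in symmetric variables $\sigma_{ij}=\sigma_{ji}$, $i,j\in V=[p]$; $\mathbb R[\Sigma_E]\subseteq\mathbb R[\Sigma]$ is the subring generated by $\sigma_{ii}$ ($i\in V$) and $\sigma_{ij}$ ($ij\in E$). $G$ naturally ordered means $ij\in E\Rightarrow i<j$. $I_G$ is the ideal generated by $|\Sigma_{ij|\mathrm{pa}(j)}|$ for $i<j$ with $ij\notin E$, where $\Sigma_{ij|K}$ has rows $(i,K)$ and columns $(j,K)$. $S_G$ is the multiplicatively closed set $\{\prod_{i\in V}|\Sigma_{\mathrm{pa}(i)}|^{k_i}:k_i\in\mathbb N\}$. *)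

theory Defs
  imports Complex_Main "HOL-Library.Poly_Mapping" "HOL-Combinatorics.Permutations"
begin

text \<open>Real polynomials in commuting variables indexed by pairs of natural numbers.
  The symmetric variable sigma_ij = sigma_ji is the variable indexed by (min i j, max i j).\<close>

type_synonym rpoly = "((nat \<times> nat) \<Rightarrow>\<^sub>0 nat) \<Rightarrow>\<^sub>0 real"

definition pvar :: "nat \<times> nat \<Rightarrow> rpoly" where
  "pvar v = Poly_Mapping.single (Poly_Mapping.single v 1) 1"

definition sigma :: "nat \<Rightarrow> nat \<Rightarrow> rpoly" where
  "sigma i j = pvar (min i j, max i j)"

definition pvars :: "rpoly \<Rightarrow> (nat \<times> nat) set" where
  "pvars f = (\<Union>m\<in>Poly_Mapping.keys f. Poly_Mapping.keys m)"

definition RSigma :: "nat \<Rightarrow> rpoly set" where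
  "RSigma p = {f. pvars f \<subseteq> {(i,j). 1 \<le> i \<and> i \<le> j \<and> j \<le> p}}"

text \<open>R[Sigma_E]: generated by sigma_ii (i in V) and sigma_ij (ij in E, stored as (i,j) with i<j).\<close>
definition RSigmaE :: "nat \<Rightarrow> (nat \<times> nat) set \<Rightarrow> rpoly set" where
  "RSigmaE p E = {f. pvars f \<subseteq> {(i,i) | i. 1 \<le> i \<and> i \<le> p} \<union> E}"

definition detl :: "nat list \<Rightarrow> nat list \<Rightarrow> rpoly" where
  "detl rs cs = (\<Sum>q | q permutes {..<length rs}.
      of_int (sign q) * (\<Prod>a<length rs. sigma (rs ! a) (cs ! (q a))))"

definition pa :: "(nat \<times> nat) set \<Rightarrow> nat \<Rightarrow> nat list" where
  "pa E j = sorted_list_of_set {i. (i, j) \<in> E}"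

definition cond_minor :: "nat \<Rightarrow> nat \<Rightarrow> nat list \<Rightarrow> rpoly" where
  "cond_minor i j K = detl (i # K) (j # K)"

definition ideal_gen :: "rpoly set \<Rightarrow> rpoly set \<Rightarrow> rpoly set" where
  "ideal_gen R B = {f. \<exists>F c. finite F \<and> F \<subseteq> B \<and> (\<forall>b\<in>F. c b \<in> R) \<and> f = (\<Sum>b\<in>F. c b * b)}"

definition I_G :: "nat \<Rightarrow> (nat \<times> nat) set \<Rightarrow> rpoly set" where
  "I_G p E = ideal_gen (RSigma p) {cond_minor i j (pa E j) | i j.
      1 \<le> i \<and> i < j \<and> j \<le> p \<and> (i, j) \<notin> E}"

definition S_G :: "nat \<Rightarrow> (nat \<times> nat) set \<Rightarrow> rpoly set" where
  "S_G p E = {(\<Prod>i\<in>{1..p}. detl (pa E i) (pa E i) ^ k i) | k. True}"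

definition naturally_ordered_dag :: "nat \<Rightarrow> (nat \<times> nat) set \<Rightarrow> bool" where
  "naturally_ordered_dag p E \<longleftrightarrow> E \<subseteq> {1..p} \<times> {1..p} \<and> (\<forall>(i,j)\<in>E. i < j)"

end

theory Submission
  imports Defs Jordan_Normal_Form.Determinant
begin

lemma pvars_zero[simp]: "pvars 0 = {}" by (simp add: pvars_def)

lemma pvars_add: "pvars (f + g) \<subseteq> pvars f \<union> pvars g"
  unfolding pvars_def using keys_add[of f g] by blast

lemma pvars_uminus[simp]: "pvars (- f) = pvars f"
  unfolding pvars_def by simp

lemma pvars_diff: "pvars (f - g) \<subseteq> pvars f \<union> pvars g"
  unfolding pvars_def using keys_diff[of f g] by blast

lemma pvars_mult: "pvars (f * g) \<subseteq> pvars f \<union> pvars g"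
proof
  fix v assume "v \<in> pvars (f * g)"
  then obtain m where m: "m \<in> Poly_Mapping.keys (f*g)" "v \<in> Poly_Mapping.keys m"
    unfolding pvars_def by blast
  then obtain a b where ab: "m = a + b" "a \<in> Poly_Mapping.keys f" "b \<in> Poly_Mapping.keys g"
    using keys_mult[of f g] by blast
  have "v \<in> Poly_Mapping.keys a \<union> Poly_Mapping.keys b" using m(2) ab(1) keys_add[of a b] by blast
  then show "v \<in> pvars f \<union> pvars g" using ab unfolding pvars_def by blast
qed

lemma pvars_single0[simp]: "pvars (Poly_Mapping.single 0 c) = {}"
  unfolding pvars_def by simp

lemma pvars_one[simp]: "pvars 1 = {}"
  unfolding pvars_def by simp

lemma pvars_of_nat[simp]: "pvars (of_nat n :: rpoly) = {}"
  by (metis pvars_single0 single_of_nat)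

lemma pvars_of_int[simp]: "pvars (of_int c :: rpoly) = {}"
  by (cases c rule: int_cases) (auto simp del: of_nat_Suc)

lemma pvars_pvar: "pvars (pvar v) \<subseteq> {v}"
  unfolding pvars_def pvar_def by simp

definition PV :: "(nat \<times> nat) set \<Rightarrow> rpoly set" where
  "PV V = {f. pvars f \<subseteq> V}"

lemma PV_add: "f \<in> PV V \<Longrightarrow> g \<in> PV V \<Longrightarrow> f + g \<in> PV V"
  unfolding PV_def using pvars_add by blast
lemma PV_diff: "f \<in> PV V \<Longrightarrow> g \<in> PV V \<Longrightarrow> f - g \<in> PV V"
  unfolding PV_def using pvars_diff by blast
lemma PV_mult: "f \<in> PV V \<Longrightarrow> g \<in> PV V \<Longrightarrow> f * g \<in> PV V"
  unfolding PV_def using pvars_mult by blast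
lemma PV_uminus: "f \<in> PV V \<Longrightarrow> - f \<in> PV V"
  unfolding PV_def by simp
lemma PV_of_int[simp]: "of_int c \<in> PV V"
  unfolding PV_def by simp
lemma PV_one[simp]: "1 \<in> PV V"
  unfolding PV_def by simp
lemma PV_zero[simp]: "0 \<in> PV V"
  unfolding PV_def by simp
lemma PV_pvar: "v \<in> V \<Longrightarrow> pvar v \<in> PV V"
  unfolding PV_def using pvars_pvar by blast
lemma PV_mono: "V \<subseteq> U \<Longrightarrow> f \<in> PV V \<Longrightarrow> f \<in> PV U"
  unfolding PV_def by blast
lemma PV_power: "f \<in> PV V \<Longrightarrow> f ^ k \<in> PV V"
  by (induct k) (auto intro: PV_mult)
lemma PV_sum: "(\<And>x. x \<in> A \<Longrightarrow> g x \<in> PV V) \<Longrightarrow> sum g A \<in> PV V"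
  by (induct A rule: infinite_finite_induct) (auto intro: PV_add)
lemma PV_prod: "(\<And>x. x \<in> A \<Longrightarrow> g x \<in> PV V) \<Longrightarrow> prod g A \<in> PV V"
  by (induct A rule: infinite_finite_induct) (auto intro: PV_mult)

lemma update_eq_add: "a \<notin> Poly_Mapping.keys f \<Longrightarrow> Poly_Mapping.update a b f = f + Poly_Mapping.single a b"
  by (rule poly_mapping_eqI) (auto simp: lookup_update lookup_add lookup_single in_keys_iff when_def)

lemma pvar_power: "pvar v ^ k = Poly_Mapping.single (Poly_Mapping.single v k) 1"
proof (induct k)
  case 0 then show ?case by simp
next
  case (Suc k)
  have "pvar v ^ Suc k = Poly_Mapping.single (Poly_Mapping.single v k) 1 * pvar v"
    using Suc by (simp add: mult.commute)
  also have "\<dots> = Poly_Mapping.single (Poly_Mapping.single v (Suc k)) 1"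
    unfolding pvar_def mult_single by (simp add: single_add[symmetric])
  finally show ?case .
qed

lemma poly_induct_PV:
  assumes f: "f \<in> PV V"
    and const: "\<And>c. Q (Poly_Mapping.single 0 c)"
    and var: "\<And>v. v \<in> V \<Longrightarrow> Q (pvar v)"
    and add: "\<And>a b. Q a \<Longrightarrow> Q b \<Longrightarrow> a \<in> PV V \<Longrightarrow> b \<in> PV V \<Longrightarrow> Q (a + b)"
    and mult: "\<And>a b. Q a \<Longrightarrow> Q b \<Longrightarrow> a \<in> PV V \<Longrightarrow> b \<in> PV V \<Longrightarrow> Q (a * b)"
  shows "Q f"
proof -
  have pow: "v \<in> V \<Longrightarrow> Q (pvar v ^ k) \<and> pvar v ^ k \<in> PV V" for v k
  proof (induct k)
    case 0 then show ?case using const[of 1] by simp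
  next
    case (Suc k) then show ?case using var[of v] mult[of "pvar v ^ k" "pvar v"] PV_pvar[of v V]
      by (simp add: mult.commute PV_mult)
  qed
  have mono: "Poly_Mapping.keys m \<subseteq> V \<Longrightarrow> Q (Poly_Mapping.single m 1) \<and> Poly_Mapping.single m 1 \<in> PV V" for m :: "(nat\<times>nat) \<Rightarrow>\<^sub>0 nat"
  proof (induct m rule: update_induct)
    case const then show ?case using assms(2)[of 1] by simp
  next
    case (update m a b)
    have e: "Poly_Mapping.update a b m = m + Poly_Mapping.single a b" using update_eq_add[OF update(1)] .
    have ka: "Poly_Mapping.keys (Poly_Mapping.update a b m) = insert a (Poly_Mapping.keys m)"
      using update(1,2) unfolding e by (auto simp: in_keys_iff lookup_add lookup_single when_def split: if_splits)
    then have "Poly_Mapping.keys m \<subseteq> V" "a \<in> V" using update(4) by auto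
    then have IH: "Q (Poly_Mapping.single m 1)" "Poly_Mapping.single m 1 \<in> PV V"
      and P2: "Q (pvar a ^ b)" "pvar a ^ b \<in> PV V" using update(3) pow by auto
    have "Poly_Mapping.single (Poly_Mapping.update a b m) 1 = Poly_Mapping.single m 1 * pvar a ^ b"
      unfolding e pvar_power mult_single by simp
    then show ?case using mult[OF IH(1) P2(1) IH(2) P2(2)] PV_mult[OF IH(2) P2(2)] by simp
  qed
  have "pvars f \<subseteq> V" using f unfolding PV_def by simp
  then show ?thesis
  proof (induct f rule: update_induct)
    case const then show ?case using assms(2)[of 0] by simp
  next
    case (update g a b)
    have e: "Poly_Mapping.update a b g = g + Poly_Mapping.single a b" using update_eq_add[OF update(1)] .
    have ka: "Poly_Mapping.keys (Poly_Mapping.update a b g) = insert a (Poly_Mapping.keys g)"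
      using update(1,2) unfolding e by (auto simp: in_keys_iff lookup_add lookup_single when_def split: if_splits)
    then have g: "pvars g \<subseteq> V" and a: "Poly_Mapping.keys a \<subseteq> V" using update(4) unfolding pvars_def by auto
    have sa: "Poly_Mapping.single a b = Poly_Mapping.single 0 b * Poly_Mapping.single a 1"
      by (simp add: mult_single)
    have Qs: "Q (Poly_Mapping.single a b)" "Poly_Mapping.single a b \<in> PV V"
      using mono[OF a] mult[OF const[of b], of "Poly_Mapping.single a 1"] PV_mult[of "Poly_Mapping.single 0 b" V]
      unfolding sa by (auto simp: PV_def)
    have "g \<in> PV V" using g unfolding PV_def by simp
    then show ?case unfolding e using add[OF update(3)[OF g] Qs(1)] Qs(2) by simp
  qed
qed


definition sv :: "nat \<Rightarrow> nat \<Rightarrow> nat \<times> nat" where "sv a b = (min a b, max a b)"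

lemma PV_sigma: "sv a b \<in> V \<Longrightarrow> sigma a b \<in> PV V"
  unfolding sigma_def sv_def by (rule PV_pvar)

lemma PV_det: "(\<And>a b. a < dim_row A \<Longrightarrow> b < dim_col A \<Longrightarrow> A $$ (a,b) \<in> PV V) \<Longrightarrow> det A \<in> PV V"
  unfolding det_def
  by (auto intro!: PV_sum PV_mult PV_prod simp: permutes_in_image)

lemma detl_det: "detl rs cs = det (mat (length rs) (length rs) (\<lambda>(a,b). sigma (rs!a) (cs!b)))"
proof -
  let ?n = "length rs"
  have "det (mat ?n ?n (\<lambda>(a,b). sigma (rs!a) (cs!b))) =
    (\<Sum>q\<in>{q. q permutes {0..<?n}}. signof q * (\<Prod>a=0..<?n. mat ?n ?n (\<lambda>(a,b). sigma (rs!a) (cs!b)) $$ (a, q a)))"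
    by (rule det_def') simp
  also have "\<dots> = (\<Sum>q\<in>{q. q permutes {..<?n}}. signof q * (\<Prod>a<?n. sigma (rs!a) (cs!(q a))))"
    by (rule sum.cong) (auto simp: atLeast0LessThan permutes_in_image intro!: prod.cong)
  finally show ?thesis unfolding detl_def by simp
qed

lemma detl_PV: "length cs = length rs \<Longrightarrow> (\<And>x y. x \<in> set rs \<Longrightarrow> y \<in> set cs \<Longrightarrow> sv x y \<in> V) \<Longrightarrow> detl rs cs \<in> PV V"
  unfolding detl_det by (rule PV_det) (auto intro!: PV_sigma)

lemma cond_minor_split:
  "\<exists>R. cond_minor i j K = sigma i j * detl K K + R \<and>
     R \<in> PV ({sv i k | k. k \<in> set K} \<union> {sv k c | k c. k \<in> set K \<and> c \<in> set (j#K)})"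
proof -
  define n where "n = length K"
  define Z where "Z = {sv i k | k. k \<in> set K} \<union> {sv k c | k c. k \<in> set K \<and> c \<in> set (j#K)}"
  define A where "A = mat (Suc n) (Suc n) (\<lambda>(a,b). sigma ((i#K)!a) ((j#K)!b))"
  have Ac: "A \<in> carrier_mat (Suc n) (Suc n)" unfolding A_def by simp
  have "cond_minor i j K = det A" unfolding cond_minor_def detl_det A_def n_def by simp
  also have "\<dots> = (\<Sum>b<Suc n. A $$ (0,b) * cofactor A 0 b)"
    by (rule laplace_expansion_row[OF Ac]) simp
  also have "\<dots> = A $$ (0,0) * cofactor A 0 0 + (\<Sum>b<n. A $$ (0,Suc b) * cofactor A 0 (Suc b))"
    by (simp only: sum.lessThan_Suc_shift)
  finally have eq: "cond_minor i j K = A $$ (0,0) * cofactor A 0 0 + (\<Sum>b<n. A $$ (0,Suc b) * cofactor A 0 (Suc b))" .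
  have md: "mat_delete A 0 0 = mat n n (\<lambda>(a,b). sigma (K!a) (K!b))"
    unfolding mat_delete_def A_def by (rule eq_matI) auto
  have c00: "A $$ (0,0) * cofactor A 0 0 = sigma i j * detl K K"
    unfolding cofactor_def md detl_det n_def by (simp add: A_def)
  have R: "(\<Sum>b<n. A $$ (0,Suc b) * cofactor A 0 (Suc b)) \<in> PV Z"
  proof (rule PV_sum, rule PV_mult)
    fix b assume b: "b \<in> {..<n}"
    show "A $$ (0,Suc b) \<in> PV Z" using b unfolding A_def Z_def n_def
      by (auto intro!: PV_sigma)
    have "det (mat_delete A 0 (Suc b)) \<in> PV Z"
    proof (rule PV_det)
      fix a c assume "a < dim_row (mat_delete A 0 (Suc b))" "c < dim_col (mat_delete A 0 (Suc b))"
      then have a: "a < n" and c: "c < n" unfolding A_def by auto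
      define c' where "c' = (if c < Suc b then c else Suc c)"
      have c': "c' < Suc n" using c unfolding c'_def by auto
      have "mat_delete A 0 (Suc b) $$ (a,c) = sigma (K!a) ((j#K)!c')"
        unfolding mat_delete_def A_def c'_def using a c by auto
      moreover have "(j#K)!c' \<in> set (j#K)" using c' n_def by (metis length_Cons nth_mem)
      moreover have "K!a \<in> set K" using a n_def by simp
      ultimately show "mat_delete A 0 (Suc b) $$ (a,c) \<in> PV Z"
        unfolding Z_def by (auto intro!: PV_sigma)
    qed
    then show "cofactor A 0 (Suc b) \<in> PV Z" unfolding cofactor_def
      by (intro PV_mult PV_power PV_uminus) auto
  qed
  show ?thesis using eq c00 R unfolding Z_def by auto
qed


lemma ideal_gen_zero: "0 \<in> ideal_gen R B"
  unfolding ideal_gen_def by (rule CollectI, rule exI[of _ "{}"]) auto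

lemma ideal_gen_gen: "g \<in> B \<Longrightarrow> g \<in> ideal_gen (PV V) B"
  unfolding ideal_gen_def by (rule CollectI, rule exI[of _ "{g}"], rule exI[of _ "\<lambda>_. 1"]) auto

lemma ideal_gen_add: assumes "a \<in> ideal_gen (PV V) B" "b \<in> ideal_gen (PV V) B"
  shows "a + b \<in> ideal_gen (PV V) B"
proof -
  obtain F1 c1 where 1: "finite F1" "F1 \<subseteq> B" "\<forall>x\<in>F1. c1 x \<in> PV V" "a = (\<Sum>x\<in>F1. c1 x * x)"
    using assms(1) unfolding ideal_gen_def by blast
  obtain F2 c2 where 2: "finite F2" "F2 \<subseteq> B" "\<forall>x\<in>F2. c2 x \<in> PV V" "b = (\<Sum>x\<in>F2. c2 x * x)"
    using assms(2) unfolding ideal_gen_def by blast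
  define c where "c x = (if x \<in> F1 then c1 x else 0) + (if x \<in> F2 then c2 x else 0)" for x
  have "(\<Sum>x\<in>F1 \<union> F2. c x * x) = (\<Sum>x\<in>F1 \<union> F2. (if x \<in> F1 then c1 x * x else 0)) + (\<Sum>x\<in>F1 \<union> F2. (if x \<in> F2 then c2 x * x else 0))"
    unfolding sum.distrib[symmetric] by (rule sum.cong) (auto simp: c_def distrib_right)
  also have "\<dots> = a + b" unfolding 1(4) 2(4)
    by (simp add: sum.If_cases 1(1) 2(1) Int_absorb1 Int_absorb2)
  finally have "a + b = (\<Sum>x\<in>F1 \<union> F2. c x * x)" by simp
  moreover have "\<forall>x\<in>F1 \<union> F2. c x \<in> PV V" unfolding c_def using 1(3) 2(3) by (auto intro: PV_add)
  ultimately show ?thesis unfolding ideal_gen_def mem_Collect_eq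
    by (intro exI[of _ "F1 \<union> F2"] exI[of _ c]) (use 1 2 in auto)
qed

lemma ideal_gen_mult: assumes "a \<in> ideal_gen (PV V) B" "c \<in> PV V"
  shows "c * a \<in> ideal_gen (PV V) B"
proof -
  obtain F1 c1 where 1: "finite F1" "F1 \<subseteq> B" "\<forall>x\<in>F1. c1 x \<in> PV V" "a = (\<Sum>x\<in>F1. c1 x * x)"
    using assms(1) unfolding ideal_gen_def by blast
  have "c * a = (\<Sum>x\<in>F1. (c * c1 x) * x)" unfolding 1(4) by (simp add: sum_distrib_left mult.assoc)
  moreover have "\<forall>x\<in>F1. c * c1 x \<in> PV V" using 1(3) assms(2) by (auto intro: PV_mult)
  ultimately show ?thesis unfolding ideal_gen_def mem_Collect_eq
    by (intro exI[of _ "F1"] exI[of _ "\<lambda>x. c * c1 x"]) (use 1 in auto)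
qed

lemma ideal_gen_diff: assumes "a \<in> ideal_gen (PV V) B" "b \<in> ideal_gen (PV V) B"
  shows "a - b \<in> ideal_gen (PV V) B"
proof -
  have "(-1) * b \<in> ideal_gen (PV V) B" using ideal_gen_mult[OF assms(2), of "-1"] PV_uminus[OF PV_one] by simp
  from ideal_gen_add[OF assms(1) this] show ?thesis by simp
qed

locale ndag = fixes p :: nat and E :: "(nat \<times> nat) set"
  assumes nod: "naturally_ordered_dag p E"
begin

definition "Rv = {(i,j). 1 \<le> i \<and> i \<le> j \<and> j \<le> p}"
definition "Dg = {(i,i) | i. 1 \<le> i \<and> i \<le> p}"
definition "Vs n = {(a,b). 1 \<le> a \<and> a \<le> b \<and> b \<le> n} \<union> Dg \<union> E"
definition "dd i = detl (pa E i) (pa E i)"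
definition "Sn n = {(\<Prod>i\<in>{1..p}. dd i ^ k i) | k. \<forall>i. n < i \<longrightarrow> k i = 0}"
definition "RE = PV (Dg \<union> E)"
abbreviation "II \<equiv> I_G p E"

lemma E_sub: "(a,b) \<in> E \<Longrightarrow> 1 \<le> a \<and> a < b \<and> b \<le> p"
  using nod unfolding naturally_ordered_dag_def by auto

lemma RSigma_eq: "RSigma p = PV Rv" unfolding RSigma_def PV_def Rv_def by simp
lemma RSigmaE_eq: "RSigmaE p E = RE" unfolding RSigmaE_def PV_def RE_def Dg_def by simp
lemma II_eq: "II = ideal_gen (PV Rv) {cond_minor i j (pa E j) | i j. 1 \<le> i \<and> i < j \<and> j \<le> p \<and> (i, j) \<notin> E}"
  unfolding I_G_def RSigma_eq ..

lemma Vs_Rv: assumes "n \<le> p" shows "Vs n \<subseteq> Rv"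
proof
  fix x assume x: "x \<in> Vs n"
  obtain a b where ab: "x = (a,b)" by force
  show "x \<in> Rv"
  proof (cases "(a,b) \<in> E")
    case True then show ?thesis using E_sub[of a b] ab unfolding Rv_def by simp
  next
    case False then show ?thesis using x ab assms unfolding Vs_def Rv_def Dg_def by auto
  qed
qed
lemma Rv_Vs: "Rv \<subseteq> Vs p" unfolding Vs_def Rv_def by auto
lemma DgE_Vs: "Dg \<union> E \<subseteq> Vs n" unfolding Vs_def by blast
lemma RE_Vs: "RE \<subseteq> PV (Vs n)" unfolding RE_def using PV_mono[OF DgE_Vs] by blast
lemma Vs0': "Vs 0 = Dg \<union> E" unfolding Vs_def by auto
lemma Vs0: "PV (Vs 0) = RE" unfolding RE_def Vs0' ..
lemma Vs_mono': "m \<le> n \<Longrightarrow> Vs m \<subseteq> Vs n" unfolding Vs_def by auto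
lemma Vs_mono: "m \<le> n \<Longrightarrow> PV (Vs m) \<subseteq> PV (Vs n)" using PV_mono[OF Vs_mono'] by blast

lemma set_pa: "set (pa E j) = {i. (i,j) \<in> E}"
proof -
  have "{i. (i,j) \<in> E} \<subseteq> {1..p}"
  proof
    fix x assume "x \<in> {i. (i,j) \<in> E}" then show "x \<in> {1..p}" using E_sub[of x j] by auto
  qed
  then have "finite {i. (i,j) \<in> E}" by (rule finite_subset) simp
  then show ?thesis unfolding pa_def by simp
qed

lemma dd_PV: "i \<le> Suc n \<Longrightarrow> dd i \<in> PV (Vs n)"
  unfolding dd_def
proof (rule detl_PV)
  fix x y assume i: "i \<le> Suc n" and "x \<in> set (pa E i)" "y \<in> set (pa E i)"
  then have "(x,i) \<in> E" "(y,i) \<in> E" unfolding set_pa by auto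
  then have "1 \<le> x" "x < i" "1 \<le> y" "y < i" using E_sub by auto
  then have "1 \<le> min x y" "min x y \<le> max x y" "max x y \<le> n" using i by auto
  then show "sv x y \<in> Vs n" unfolding sv_def Vs_def by simp
qed simp

lemma Sn_PV: "s \<in> Sn m \<Longrightarrow> m \<le> Suc n \<Longrightarrow> s \<in> PV (Vs n)"
  unfolding Sn_def
proof (clarify)
  fix k :: "nat \<Rightarrow> nat" assume k: "\<forall>i. m < i \<longrightarrow> k i = 0" and m: "m \<le> Suc n"
  show "(\<Prod>i\<in>{1..p}. dd i ^ k i) \<in> PV (Vs n)"
  proof (rule PV_prod)
    fix i show "dd i ^ k i \<in> PV (Vs n)"
    proof (cases "m < i")
      case True then show ?thesis using k by simp
    next
      case False then show ?thesis using m by (intro PV_power dd_PV) simp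
    qed
  qed
qed

lemma Sn_one: "1 \<in> Sn n"
  unfolding Sn_def by (rule CollectI, rule exI[of _ "\<lambda>_. 0"]) simp

lemma Sn_mult: assumes "s \<in> Sn n" "t \<in> Sn n" shows "s * t \<in> Sn n"
proof -
  obtain k1 where 1: "\<forall>i. n < i \<longrightarrow> k1 i = 0" "s = (\<Prod>i\<in>{1..p}. dd i ^ k1 i)" using assms(1) unfolding Sn_def by blast
  obtain k2 where 2: "\<forall>i. n < i \<longrightarrow> k2 i = 0" "t = (\<Prod>i\<in>{1..p}. dd i ^ k2 i)" using assms(2) unfolding Sn_def by blast
  have "s * t = (\<Prod>i\<in>{1..p}. dd i ^ (k1 i + k2 i))" unfolding 1 2 by (simp add: power_add prod.distrib)
  then show ?thesis unfolding Sn_def using 1 2 by (intro CollectI exI[of _ "\<lambda>i. k1 i + k2 i"]) auto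
qed

lemma Sn_mono: assumes "m \<le> n" "s \<in> Sn m" shows "s \<in> Sn n"
proof -
  obtain k where k: "\<forall>i. m < i \<longrightarrow> k i = 0" "s = (\<Prod>i\<in>{1..p}. dd i ^ k i)" using assms(2) unfolding Sn_def by blast
  have "\<forall>i. n < i \<longrightarrow> k i = 0" using k(1) assms(1) by simp
  then show ?thesis unfolding Sn_def using k(2) by blast
qed

lemma dd_Sn: assumes "1 \<le> i" "i \<le> p" shows "dd i \<in> Sn i"
proof -
  have "(\<Prod>x\<in>{1..p}. dd x ^ (if x = i then 1 else 0)) = (\<Prod>x\<in>{1..p}. if x = i then dd x else 1)"
    by (rule prod.cong) auto
  also have "\<dots> = dd i" using assms by (simp add: prod.delta)
  finally show ?thesis unfolding Sn_def by (intro CollectI exI[of _ "\<lambda>x. if x = i then 1 else 0"]) auto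
qed

lemma Sn_SG: "Sn n \<subseteq> S_G p E" unfolding Sn_def S_G_def dd_def by blast

end

context ndag begin

definition Fam :: "nat \<Rightarrow> rpoly set \<Rightarrow> bool" where
  "Fam n F \<longleftrightarrow> (\<exists>s\<in>Sn n. \<forall>f\<in>F. \<exists>h\<in>RE. s * f - h \<in> II)"

lemma II_add: "a \<in> II \<Longrightarrow> b \<in> II \<Longrightarrow> a + b \<in> II"
  unfolding II_eq by (rule ideal_gen_add)
lemma II_diff: "a \<in> II \<Longrightarrow> b \<in> II \<Longrightarrow> a - b \<in> II"
  unfolding II_eq by (rule ideal_gen_diff)
lemma II_mult: "a \<in> II \<Longrightarrow> c \<in> PV Rv \<Longrightarrow> c * a \<in> II"
  unfolding II_eq by (rule ideal_gen_mult)
lemma II_zero: "0 \<in> II"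
  unfolding II_eq by (rule ideal_gen_zero)
lemma II_gen: "1 \<le> i \<Longrightarrow> i < j \<Longrightarrow> j \<le> p \<Longrightarrow> (i,j) \<notin> E \<Longrightarrow> cond_minor i j (pa E j) \<in> II"
  unfolding II_eq by (rule ideal_gen_gen) blast

lemma PVs_Rv: "n \<le> p \<Longrightarrow> g \<in> PV (Vs n) \<Longrightarrow> g \<in> PV Rv"
  using PV_mono[OF Vs_Rv] by blast

lemma RE_Rv: "h \<in> RE \<Longrightarrow> h \<in> PV Rv"
  using RE_Vs[of 0] PVs_Rv[of 0] by blast

lemma step_single:
  assumes n: "Suc n \<le> p"
    and IH: "\<And>F. finite F \<Longrightarrow> F \<subseteq> PV (Vs n) \<Longrightarrow> Fam n F"
    and f: "f \<in> PV (Vs (Suc n))"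
  shows "\<exists>s\<in>Sn (Suc n). \<exists>h\<in>RE. s * f - h \<in> II"
proof -
  have IH1: "\<exists>t\<in>Sn n. \<exists>k\<in>RE. t * g - k \<in> II" if "g \<in> PV (Vs n)" for g
    using IH[of "{g}"] that unfolding Fam_def by auto
  have SnR: "s \<in> Sn (Suc n) \<Longrightarrow> s \<in> PV Rv" for s
    using Sn_PV[of s "Suc n" n] PVs_Rv[of n] n by auto
  have SnV: "s \<in> Sn (Suc n) \<Longrightarrow> s \<in> PV (Vs n)" for s
    using Sn_PV[of s "Suc n" n] by auto
  have VR: "g \<in> PV (Vs (Suc n)) \<Longrightarrow> g \<in> PV Rv" for g using PVs_Rv[OF n] .
  show ?thesis
  proof (rule poly_induct_PV[OF f, where Q = "\<lambda>f. \<exists>s\<in>Sn (Suc n). \<exists>h\<in>RE. s * f - h \<in> II"])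
    fix c
    have "Poly_Mapping.single 0 c \<in> RE" unfolding RE_def PV_def by simp
    then show "\<exists>s\<in>Sn (Suc n). \<exists>h\<in>RE. s * Poly_Mapping.single 0 c - h \<in> II"
      using Sn_one II_zero by force
  next
    fix v assume v: "v \<in> Vs (Suc n)"
    obtain a b where ab: "v = (a,b)" by force
    show "\<exists>s\<in>Sn (Suc n). \<exists>h\<in>RE. s * pvar v - h \<in> II"
    proof (cases "v \<in> Dg \<union> E")
      case True
      then have "pvar v \<in> RE" unfolding RE_def by (rule PV_pvar)
      then show ?thesis using Sn_one II_zero by force
    next
      case False
      then have ab1: "1 \<le> a" "a \<le> b" "b \<le> Suc n" using v ab unfolding Vs_def by auto
      show ?thesis
      proof (cases "b \<le> n")
        case True
        then have "v \<in> Vs n" using ab ab1 unfolding Vs_def by auto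
        then obtain t k where "t \<in> Sn n" "k \<in> RE" "t * pvar v - k \<in> II" using IH1[OF PV_pvar] by blast
        then show ?thesis using Sn_mono[of n "Suc n"] by auto
      next
        case False
        then have b: "b = Suc n" using ab1 by simp
        have ane: "a \<noteq> b" using \<open>v \<notin> Dg \<union> E\<close> ab ab1 n b unfolding Dg_def by auto
        then have alb: "a < b" using ab1 by simp
        have nE: "(a,b) \<notin> E" using \<open>v \<notin> Dg \<union> E\<close> ab by auto
        define K where "K = pa E b"
        have g: "cond_minor a b K \<in> II" unfolding K_def using II_gen[OF ab1(1) alb _ nE] b n by simp
        obtain R where R: "cond_minor a b K = sigma a b * detl K K + R"
          and RZ: "R \<in> PV ({sv a k | k. k \<in> set K} \<union> {sv k c | k c. k \<in> set K \<and> c \<in> set (b#K)})"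
          using cond_minor_split by blast
        have Kset: "k \<in> set K \<Longrightarrow> 1 \<le> k \<and> k < b \<and> (k,b) \<in> E" for k
          unfolding K_def set_pa using E_sub by auto
        have "{sv a k | k. k \<in> set K} \<union> {sv k c | k c. k \<in> set K \<and> c \<in> set (b#K)} \<subseteq> Vs n"
        proof
          fix x assume "x \<in> {sv a k | k. k \<in> set K} \<union> {sv k c | k c. k \<in> set K \<and> c \<in> set (b#K)}"
          then consider k where "x = sv a k" "k \<in> set K" | k where "x = sv k b" "k \<in> set K"
            | k c where "x = sv k c" "k \<in> set K" "c \<in> set K" by auto
          then show "x \<in> Vs n"
          proof cases
            case 1
            then have "1 \<le> min a k" "min a k \<le> max a k" "max a k \<le> n" using Kset[of k] ab1 alb b by auto
            then show ?thesis using 1 unfolding sv_def Vs_def by simp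
          next
            case 2
            then have "x = (k,b)" "(k,b) \<in> E" using Kset[of k] unfolding sv_def by auto
            then show ?thesis unfolding Vs_def by simp
          next
            case 3
            then have "1 \<le> min k c" "min k c \<le> max k c" "max k c \<le> n" using Kset[of k] Kset[of c] b by auto
            then show ?thesis using 3 unfolding sv_def Vs_def by simp
          qed
        qed
        then have RV: "R \<in> PV (Vs n)" using RZ PV_mono by blast
        obtain t k where t: "t \<in> Sn n" and k: "k \<in> RE" and tk: "t * R - k \<in> II" using IH1[OF RV] by blast
        have ddS: "dd b \<in> Sn (Suc n)" using dd_Sn[of b] ab1 alb b n by simp
        have ts: "t \<in> Sn (Suc n)" using Sn_mono[OF _ t] by simp
        have s: "t * dd b \<in> Sn (Suc n)" using Sn_mult[OF ts ddS] .
        have sab: "sigma a b = pvar v" unfolding sigma_def ab using alb by simp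
        have eq: "t * dd b * pvar v - (- k) = t * cond_minor a b K - (t * R - k)"
        proof -
          have ddK: "dd b = detl K K" unfolding dd_def K_def ..
          show ?thesis unfolding R sab ddK by (simp add: algebra_simps)
        qed
        have "t * cond_minor a b K - (t * R - k) \<in> II"
          by (intro II_diff II_mult g tk SnR ts)
        moreover have "- k \<in> RE" using k unfolding RE_def by (rule PV_uminus)
        ultimately show ?thesis using s eq by metis
      qed
    qed
  next
    fix x y
    assume Qx: "\<exists>s\<in>Sn (Suc n). \<exists>h\<in>RE. s * x - h \<in> II" and Qy: "\<exists>s\<in>Sn (Suc n). \<exists>h\<in>RE. s * y - h \<in> II"
      and x: "x \<in> PV (Vs (Suc n))" and y: "y \<in> PV (Vs (Suc n))"
    obtain s1 h1 where s1: "s1 \<in> Sn (Suc n)" "h1 \<in> RE" "s1 * x - h1 \<in> II" using Qx by blast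
    obtain s2 h2 where s2: "s2 \<in> Sn (Suc n)" "h2 \<in> RE" "s2 * y - h2 \<in> II" using Qy by blast
    have hV: "h1 \<in> PV (Vs n)" "h2 \<in> PV (Vs n)" using s1 s2 RE_Vs by auto
    have XV: "s2 * h1 + s1 * h2 \<in> PV (Vs n)" using SnV[OF s1(1)] SnV[OF s2(1)] hV by (intro PV_add PV_mult)
    obtain t k where t: "t \<in> Sn n" and k: "k \<in> RE" and tk: "t * (s2 * h1 + s1 * h2) - k \<in> II" using IH1[OF XV] by blast
    have ts: "t \<in> Sn (Suc n)" using Sn_mono[OF _ t] by simp
    have eq: "(t * s1 * s2) * (x + y) - k = (t * s2) * (s1 * x - h1) + (t * s1) * (s2 * y - h2) + (t * (s2 * h1 + s1 * h2) - k)"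
      by (simp add: algebra_simps)
    have "(t * s2) * (s1 * x - h1) + (t * s1) * (s2 * y - h2) + (t * (s2 * h1 + s1 * h2) - k) \<in> II"
      by (intro II_add II_mult s1 s2 tk PV_mult SnR ts)
    moreover have "t * s1 * s2 \<in> Sn (Suc n)" by (intro Sn_mult ts s1 s2)
    ultimately show "\<exists>s\<in>Sn (Suc n). \<exists>h\<in>RE. s * (x + y) - h \<in> II" using eq k by metis
  next
    fix x y
    assume Qx: "\<exists>s\<in>Sn (Suc n). \<exists>h\<in>RE. s * x - h \<in> II" and Qy: "\<exists>s\<in>Sn (Suc n). \<exists>h\<in>RE. s * y - h \<in> II"
      and x: "x \<in> PV (Vs (Suc n))" and y: "y \<in> PV (Vs (Suc n))"
    obtain s1 h1 where s1: "s1 \<in> Sn (Suc n)" "h1 \<in> RE" "s1 * x - h1 \<in> II" using Qx by blast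
    obtain s2 h2 where s2: "s2 \<in> Sn (Suc n)" "h2 \<in> RE" "s2 * y - h2 \<in> II" using Qy by blast
    have eq: "(s1 * s2) * (x * y) - h1 * h2 = (s2 * y) * (s1 * x - h1) + h1 * (s2 * y - h2)"
      by (simp add: algebra_simps)
    have "(s2 * y) * (s1 * x - h1) + h1 * (s2 * y - h2) \<in> II"
      by (intro II_add II_mult s1 s2 PV_mult SnR VR y RE_Rv)
    moreover have "s1 * s2 \<in> Sn (Suc n)" by (intro Sn_mult s1 s2)
    moreover have "h1 * h2 \<in> RE" using s1 s2 unfolding RE_def by (intro PV_mult)
    ultimately show "\<exists>s\<in>Sn (Suc n). \<exists>h\<in>RE. s * (x * y) - h \<in> II" using eq by metis
  qed
qed

lemma step_fam:
  assumes n: "Suc n \<le> p"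
    and IH: "\<And>F. finite F \<Longrightarrow> F \<subseteq> PV (Vs n) \<Longrightarrow> Fam n F"
  shows "finite F \<Longrightarrow> F \<subseteq> PV (Vs (Suc n)) \<Longrightarrow> Fam (Suc n) F"
proof (induct F rule: finite_induct)
  case empty then show ?case unfolding Fam_def using Sn_one by blast
next
  case (insert f F)
  obtain s where s: "s \<in> Sn (Suc n)" and sF: "\<forall>g\<in>F. \<exists>h\<in>RE. s * g - h \<in> II"
    using insert unfolding Fam_def by auto
  obtain H where H: "\<forall>g\<in>F. H g \<in> RE \<and> s * g - H g \<in> II" using bchoice[of F "\<lambda>g h. h \<in> RE \<and> s * g - h \<in> II"] sF by blast
  obtain s' h' where s': "s' \<in> Sn (Suc n)" "h' \<in> RE" "s' * f - h' \<in> II"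
    using step_single[OF n IH] insert by blast
  have SnR: "x \<in> Sn (Suc n) \<Longrightarrow> x \<in> PV Rv" for x
    using Sn_PV[of x "Suc n" n] PVs_Rv[of n] n by auto
  have SnV: "x \<in> Sn (Suc n) \<Longrightarrow> x \<in> PV (Vs n)" for x
    using Sn_PV[of x "Suc n" n] by auto
  define G where "G = (\<lambda>g. s' * H g) ` F \<union> {s * h'}"
  have "finite G" unfolding G_def using insert by simp
  moreover have "G \<subseteq> PV (Vs n)" unfolding G_def using H s s' RE_Vs SnV
    by (auto intro!: PV_mult)
  ultimately have "Fam n G" by (rule IH)
  then obtain t where t: "t \<in> Sn n" and tG: "\<forall>x\<in>G. \<exists>k\<in>RE. t * x - k \<in> II" unfolding Fam_def by blast
  have ts: "t \<in> Sn (Suc n)" using Sn_mono[OF _ t] by simp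
  have "\<exists>k\<in>RE. (t * s * s') * g - k \<in> II" if g: "g \<in> insert f F" for g
  proof (cases "g = f")
    case True
    obtain k where k: "k \<in> RE" "t * (s * h') - k \<in> II" using tG unfolding G_def by auto
    have "(t * s * s') * g - k = (t * s) * (s' * f - h') + (t * (s * h') - k)"
      using True by (simp add: algebra_simps)
    moreover have "(t * s) * (s' * f - h') + (t * (s * h') - k) \<in> II"
      by (intro II_add II_mult s' k PV_mult SnR ts s)
    ultimately show ?thesis using k by metis
  next
    case False
    then have gF: "g \<in> F" using g by simp
    obtain k where k: "k \<in> RE" "t * (s' * H g) - k \<in> II" using tG gF unfolding G_def by auto
    have "(t * s * s') * g - k = (t * s') * (s * g - H g) + (t * (s' * H g) - k)"
      by (simp add: algebra_simps)
    moreover have "(t * s') * (s * g - H g) + (t * (s' * H g) - k) \<in> II"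
      using H gF by (intro II_add II_mult k PV_mult SnR ts s') auto
    ultimately show ?thesis using k by metis
  qed
  moreover have "t * s * s' \<in> Sn (Suc n)" by (intro Sn_mult ts s s')
  ultimately show ?case unfolding Fam_def by blast
qed

lemma claim: "n \<le> p \<Longrightarrow> finite F \<Longrightarrow> F \<subseteq> PV (Vs n) \<Longrightarrow> Fam n F"
proof (induct n arbitrary: F)
  case 0
  then have "\<forall>f\<in>F. 1 * f - f \<in> II \<and> f \<in> RE" using Vs0 II_zero by auto
  then show ?case unfolding Fam_def using Sn_one by blast
next
  case (Suc n)
  show ?case by (rule step_fam) (use Suc in auto)
qed

end

theorem mainTheorem9:
  fixes p :: nat and E :: "(nat \<times> nat) set" and f :: "nat \<Rightarrow> rpoly" and r :: nat
  assumes "naturally_ordered_dag p E"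
    and "\<forall>l\<in>{1..r}. f l \<in> RSigma p"
  shows "\<exists>s\<in>S_G p E. \<exists>h. (\<forall>l\<in>{1..r}. h l \<in> RSigmaE p E \<and> s * f l - h l \<in> I_G p E)"
proof -
  interpret ndag p E using assms(1) by unfold_locales
  have "f ` {1..r} \<subseteq> PV (Vs p)"
    using assms(2) PV_mono[OF Rv_Vs] unfolding RSigma_eq by blast
  then have "Fam p (f ` {1..r})" by (intro claim) auto
  then obtain s where s: "s \<in> Sn p" and sh: "\<forall>l\<in>{1..r}. \<exists>h\<in>RE. s * f l - h \<in> II"
    unfolding Fam_def by auto
  obtain h where "\<forall>l\<in>{1..r}. h l \<in> RE \<and> s * f l - h l \<in> II" using bchoice[of "{1..r}" "\<lambda>l h. h \<in> RE \<and> s * f l - h \<in> II"] sh by blast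
  then show ?thesis using s Sn_SG unfolding RSigmaE_eq by blast
qed

end
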